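(* Let $P,K\in\mathcal K^d$ with $P\subset K$ and let $x,y\in K\setminus P$. Write $P^x:=\operatorname{conv}(P\cup\{x\})$, $P^y:=\operatorname{conv}(P\cup\{y\})$, $P^{xy}:=\operatorname{conv}(P\cup\{x,y\})$, and for $w\in K\setminus P$ let $\mathcal V_w(P):=\{z\in K\setminus P:[z,w]\cap P=\emptyset\}$. If $\mathcal V_x(P)\cap\mathcal V_y(P)=\emptyset$, then $$P^x\cap P^y=P,\qquad P^x\cup P^y=P^{xy},$$ and for every valuation $\psi:\mathcal K^d\to\mathbb R$, $$\psi(P^{xy})-\psi(P^x)-\psi(P^y)+\psi(P)=0.$$
   Context: $\mathcal K^d$ is the set of compact convex subsets of $\mathbb R^d$; $[z,w]$ denotes the closed line segment between $z$ and $w$. A valuation is a map $\psi:\mathcal K^d\to\mathbb R$ with $\psi(A)+\psi(B)=\psi(A\cup B)+\psi(A\cap B)$ whenever $A,B,A\cup B\in\mathcal K^d$. *)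

theory Defs
  imports "HOL-Analysis.Analysis"
begin

text \<open>Elements of K^d: compact convex subsets (the empty set included).\<close>
definition convex_body :: "'a::euclidean_space set \<Rightarrow> bool" where
  "convex_body A \<longleftrightarrow> compact A \<and> convex A"

text \<open>Valuation on K^d; psi is a real function on sets whose values matter only on K^d.\<close>
definition valuation :: "('a::euclidean_space set \<Rightarrow> real) \<Rightarrow> bool" where
  "valuation psi \<longleftrightarrow>
     (\<forall>A B. convex_body A \<longrightarrow> convex_body B \<longrightarrow> convex_body (A \<union> B) \<longrightarrow>
        psi A + psi B = psi (A \<union> B) + psi (A \<inter> B))"

definition visible_region :: "'a::euclidean_space set \<Rightarrow> 'a set \<Rightarrow> 'a \<Rightarrow> 'a set" where
  "visible_region K P w = {z \<in> K - P. closed_segment z w \<inter> P = {}}"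

end

theory Submission
  imports Defs
begin

lemma seg_lemma:
  fixes P :: "'a::euclidean_space set"
  assumes cP: "convex P" and bP: "b \<in> P" and u: "u \<ge> 0" "v \<ge> 0" "u + v = 1"
    and z: "z = u *\<^sub>R x + v *\<^sub>R b" and zP: "z \<notin> P"
  shows "closed_segment z x \<inter> P = {}"
proof (rule ccontr)
  assume "closed_segment z x \<inter> P \<noteq> {}"
  then obtain w where wP: "w \<in> P" and "w \<in> closed_segment z x" by blast
  then obtain s where s: "w = (1 - s) *\<^sub>R z + s *\<^sub>R x" "0 \<le> s" "s \<le> 1"
    by (auto simp: in_segment)
  define D where "D = u + v * s"
  have D0: "D \<ge> 0" using u s unfolding D_def by simp
  have key: "D *\<^sub>R z = u *\<^sub>R w + (v * s) *\<^sub>R b"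
  proof -
    have ux: "u *\<^sub>R x = z - v *\<^sub>R b" using z by simp
    have "u *\<^sub>R w = (u * (1 - s)) *\<^sub>R z + s *\<^sub>R (u *\<^sub>R x)"
      unfolding s(1) by (simp add: algebra_simps)
    also have "\<dots> = (u * (1 - s)) *\<^sub>R z + s *\<^sub>R z - (s * v) *\<^sub>R b"
      by (simp add: ux algebra_simps)
    finally have "u *\<^sub>R w = (u * (1 - s) + s) *\<^sub>R z - (s * v) *\<^sub>R b"
      by (simp add: algebra_simps)
    moreover have "u * (1 - s) + s = D"
    proof -
      have e: "s * u + s * v = s" using u(3) by (metis distrib_left mult.right_neutral)
      show ?thesis unfolding D_def using e by (simp add: algebra_simps)
    qed
    ultimately have "u *\<^sub>R w = D *\<^sub>R z - (s * v) *\<^sub>R b" by simp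
    then show ?thesis by (simp add: eq_diff_eq mult.commute)
  qed
  show False
  proof (cases "D = 0")
    case True
    then have "u = 0" using u s unfolding D_def
      by (metis add_nonneg_eq_0_iff mult_nonneg_nonneg)
    then have "z = b" using z u by simp
    then show False using zP bP by simp
  next
    case False
    then have Dp: "D > 0" using D0 by simp
    have "z = (u / D) *\<^sub>R w + (v * s / D) *\<^sub>R b"
    proof -
      have "z = (1 / D) *\<^sub>R (D *\<^sub>R z)" using Dp by simp
      also have "\<dots> = (u / D) *\<^sub>R w + (v * s / D) *\<^sub>R b"
        unfolding key by (simp add: algebra_simps)
      finally show ?thesis .
    qed
    moreover have "u / D + v * s / D = 1"
    proof -
      have "u / D + v * s / D = (u + v * s) / D" by (simp add: add_divide_distrib)
      also have "\<dots> = 1" using Dp unfolding D_def by simp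
      finally show ?thesis .
    qed
    moreover have "u / D \<ge> 0" "v * s / D \<ge> 0" using u s Dp by auto
    ultimately have "z \<in> P" using cP wP bP by (metis convexD)
    then show False using zP by simp
  qed
qed

lemma hull_insert_seg:
  fixes P :: "'a::euclidean_space set"
  assumes cP: "convex P" and z: "z \<in> convex hull (P \<union> {x})" and zP: "z \<notin> P"
  shows "closed_segment z x \<inter> P = {}"
proof (cases "P = {}")
  case True then show ?thesis by simp
next
  case False
  have "convex hull (P \<union> {x}) = convex hull (insert x P)" by simp
  with z obtain u v b where "u \<ge> 0" "v \<ge> 0" "u + v = 1" "b \<in> convex hull P"
      "z = u *\<^sub>R x + v *\<^sub>R b"
    using convex_hull_insert[OF False] by auto
  moreover have "b \<in> P" using \<open>b \<in> convex hull P\<close> cP by (metis convex_hull_eq)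
  ultimately show ?thesis using seg_lemma[OF cP] zP by blast
qed

lemma in_hull3:
  fixes a b c :: "'a::euclidean_space"
  assumes "0 \<le> u" "0 \<le> v" "0 \<le> w" "u + v + w = 1"
  shows "u *\<^sub>R a + v *\<^sub>R b + w *\<^sub>R c \<in> convex hull {a, b, c}"
  unfolding convex_hull_3 using assms by blast

lemma tri_split:
  fixes p m x y :: "'a::euclidean_space"
  assumes m: "m \<in> closed_segment x y"
    and q: "q = a *\<^sub>R p + b *\<^sub>R x + c *\<^sub>R y" "a \<ge> 0" "b \<ge> 0" "c \<ge> 0" "a + b + c = 1"
  shows "q \<in> convex hull {p, m, x} \<or> q \<in> convex hull {p, m, y}"
proof -
  obtain l where l: "m = (1 - l) *\<^sub>R x + l *\<^sub>R y" "0 \<le> l" "l \<le> 1"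
    using m by (auto simp: in_segment)
  show ?thesis
  proof (cases "b * l \<ge> c * (1 - l)")
    case True
    show ?thesis
    proof (cases "l = 0")
      case True
      then have "m = x" using l by simp
      then have "q = a *\<^sub>R p + b *\<^sub>R m + c *\<^sub>R y" using q by (simp add: algebra_simps)
      then have "q \<in> convex hull {p, m, y}" using in_hull3[of a b c p m y] q(2-5) by metis
      then show ?thesis by simp
    next
      case False
      then have lp: "l > 0" using l by simp
      define mu where "mu = c / l"
      define nu where "nu = b - c * (1 - l) / l"
      have "nu \<ge> 0" unfolding nu_def using True lp by (simp add: field_simps)
      moreover have "mu \<ge> 0" unfolding mu_def using q lp by simp
      moreover have "a + mu + nu = 1"
      proof -
        have "a + mu + nu = a + b + c" unfolding mu_def nu_def using lp
          by (simp add: field_simps)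
        then show ?thesis using q(5) by simp
      qed
      moreover have "q = a *\<^sub>R p + mu *\<^sub>R m + nu *\<^sub>R x"
      proof -
        have "mu *\<^sub>R m + nu *\<^sub>R x = (mu * (1 - l) + nu) *\<^sub>R x + (mu * l) *\<^sub>R y"
          unfolding l(1) by (simp add: algebra_simps)
        moreover have "mu * (1 - l) + nu = b" "mu * l = c" unfolding mu_def nu_def using lp
          by (simp_all add: field_simps)
        ultimately have "mu *\<^sub>R m + nu *\<^sub>R x = b *\<^sub>R x + c *\<^sub>R y" by simp
        then show ?thesis using q(1) by (simp add: add.assoc)
      qed
      ultimately have "q \<in> convex hull {p, m, x}" using in_hull3[of a mu nu p m x] q(2-5) by simp
      then show ?thesis by simp
    qed
  next
    case False
    have "l \<noteq> 1"
    proof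
      assume "l = 1"
      then show False using False q(3) by simp
    qed
    then have lp: "1 - l > 0" using l by simp
    define mu where "mu = b / (1 - l)"
    define nu where "nu = c - b * l / (1 - l)"
    have "nu \<ge> 0" unfolding nu_def using False lp by (simp add: field_simps)
    moreover have "mu \<ge> 0" unfolding mu_def using q lp by simp
    moreover have "a + mu + nu = 1"
    proof -
      have "b / (1 - l) - b * l / (1 - l) = b * (1 - l) / (1 - l)"
        by (simp add: diff_divide_distrib[symmetric] algebra_simps)
      also have "\<dots> = b" using lp by simp
      finally have "a + mu + nu = a + b + c" unfolding mu_def nu_def by simp
      then show ?thesis using q(5) by simp
    qed
    moreover have "q = a *\<^sub>R p + mu *\<^sub>R m + nu *\<^sub>R y"
    proof -
      have "mu *\<^sub>R m + nu *\<^sub>R y = (mu * (1 - l)) *\<^sub>R x + (mu * l + nu) *\<^sub>R y"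
        unfolding l(1) by (simp add: algebra_simps)
      moreover have "mu * l + nu = c" unfolding mu_def nu_def by simp
      moreover have "mu * (1 - l) = b" unfolding mu_def using lp by simp
      ultimately have "mu *\<^sub>R m + nu *\<^sub>R y = b *\<^sub>R x + c *\<^sub>R y" by simp
      then show ?thesis using q(1) by (simp add: add.assoc)
    qed
    ultimately have "q \<in> convex hull {p, m, y}" using in_hull3[of a mu nu p m y] q(2-5) by simp
    then show ?thesis by simp
  qed
qed

theorem lemma4p3:
  fixes P K :: "'a::euclidean_space set" and x y :: 'a
  assumes "convex_body P" and "convex_body K" and "P \<subseteq> K"
    and "x \<in> K - P" and "y \<in> K - P"
    and "visible_region K P x \<inter> visible_region K P y = {}"
  shows "convex hull (P \<union> {x}) \<inter> convex hull (P \<union> {y}) = P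
       \<and> convex hull (P \<union> {x}) \<union> convex hull (P \<union> {y}) = convex hull (P \<union> {x, y})
       \<and> (\<forall>psi :: 'a set \<Rightarrow> real. valuation psi \<longrightarrow>
           psi (convex hull (P \<union> {x, y})) - psi (convex hull (P \<union> {x}))
             - psi (convex hull (P \<union> {y})) + psi P = 0)"
proof -
  have cP: "convex P" and kP: "compact P" using assms(1) by (auto simp: convex_body_def)
  have cK: "convex K" using assms(2) by (auto simp: convex_body_def)
  have xV: "x \<in> visible_region K P x" using assms(4) by (simp add: visible_region_def)
  hence "x \<notin> visible_region K P y" using assms(6) by blast
  hence "closed_segment x y \<inter> P \<noteq> {}" using assms(4) by (simp add: visible_region_def)
  then obtain m where mseg: "m \<in> closed_segment x y" and mP: "m \<in> P" by blast
  have hx_sub: "convex hull (P \<union> {x}) \<subseteq> K"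
    using assms(3,4) cK by (intro hull_minimal) auto
  have hy_sub: "convex hull (P \<union> {y}) \<subseteq> K"
    using assms(3,5) cK by (intro hull_minimal) auto
  have I: "convex hull (P \<union> {x}) \<inter> convex hull (P \<union> {y}) = P"
  proof
    show "P \<subseteq> convex hull (P \<union> {x}) \<inter> convex hull (P \<union> {y})"
      by (meson Int_greatest hull_subset le_supE)
    show "convex hull (P \<union> {x}) \<inter> convex hull (P \<union> {y}) \<subseteq> P"
    proof
      fix z assume z: "z \<in> convex hull (P \<union> {x}) \<inter> convex hull (P \<union> {y})"
      show "z \<in> P"
      proof (rule ccontr)
        assume zP: "z \<notin> P"
        have "z \<in> visible_region K P x" using hull_insert_seg[OF cP _ zP, of x] z zP hx_sub
          by (auto simp: visible_region_def)
        moreover have "z \<in> visible_region K P y" using hull_insert_seg[OF cP _ zP, of y] z zP hx_sub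
          by (auto simp: visible_region_def)
        ultimately show False using assms(6) by blast
      qed
    qed
  qed
  have U: "convex hull (P \<union> {x}) \<union> convex hull (P \<union> {y}) = convex hull (P \<union> {x, y})"
  proof
    show "convex hull (P \<union> {x}) \<union> convex hull (P \<union> {y}) \<subseteq> convex hull (P \<union> {x, y})"
      by (intro Un_least hull_mono) auto
    show "convex hull (P \<union> {x, y}) \<subseteq> convex hull (P \<union> {x}) \<union> convex hull (P \<union> {y})"
    proof
      fix q assume "q \<in> convex hull (P \<union> {x, y})"
      hence "q \<in> convex hull (insert x (insert y P))" by (simp add: insert_commute)
      then obtain u v b where uv: "u \<ge> 0" "v \<ge> 0" "u + v = 1"
          and b: "b \<in> convex hull (insert y P)" and q: "q = u *\<^sub>R x + v *\<^sub>R b"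
        using convex_hull_insert[of "insert y P" x] by auto
      from b obtain u' v' p where uv': "u' \<ge> 0" "v' \<ge> 0" "u' + v' = 1"
          and p: "p \<in> convex hull P" and b': "b = u' *\<^sub>R y + v' *\<^sub>R p"
        using convex_hull_insert[of P y] mP by auto
      have pP: "p \<in> P" using p cP by (metis convex_hull_eq)
      have qq: "q = (v * v') *\<^sub>R p + u *\<^sub>R x + (v * u') *\<^sub>R y"
        using q b' by (simp add: algebra_simps)
      have s1: "v * v' + u + v * u' = 1" 
      proof -
        have h: "v * u' + v * v' = v" using uv'(3) by (metis distrib_left mult.right_neutral)
        then show ?thesis using uv(3) by linarith
      qed
      have "q \<in> convex hull {p, m, x} \<or> q \<in> convex hull {p, m, y}"
        by (rule tri_split[OF mseg qq]) (use uv uv' s1 in auto)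
      moreover have "convex hull {p, m, x} \<subseteq> convex hull (P \<union> {x})"
        using pP mP by (intro hull_mono) auto
      moreover have "convex hull {p, m, y} \<subseteq> convex hull (P \<union> {y})"
        using pP mP by (intro hull_mono) auto
      ultimately show "q \<in> convex hull (P \<union> {x}) \<union> convex hull (P \<union> {y})" by blast
    qed
  qed
  have cb: "convex_body (convex hull S)" if "compact S" for S :: "'a set"
    using that by (simp add: convex_body_def compact_convex_hull)
  have V: "psi (convex hull (P \<union> {x, y})) - psi (convex hull (P \<union> {x}))
             - psi (convex hull (P \<union> {y})) + psi P = 0" if "valuation psi" for psi :: "'a set \<Rightarrow> real"
  proof -
    have "psi (convex hull (P \<union> {x})) + psi (convex hull (P \<union> {y})) =
          psi (convex hull (P \<union> {x}) \<union> convex hull (P \<union> {y})) +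
          psi (convex hull (P \<union> {x}) \<inter> convex hull (P \<union> {y}))"
    proof -
      have k1: "compact (P \<union> {x})" "compact (P \<union> {y})" "compact (P \<union> {x, y})"
        using kP by auto
      have "convex_body (convex hull (P \<union> {x}) \<union> convex hull (P \<union> {y}))"
        unfolding U by (rule cb[OF k1(3)])
      then show ?thesis using that cb[OF k1(1)] cb[OF k1(2)] unfolding valuation_def by blast
    qed
    then show ?thesis unfolding U I by simp
  qed
  show ?thesis using I U V by blast
qed

end
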